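(* Let $A=(A(i,j))_{i,j\in\mathbb{N}}$ be an infinite matrix with entries in $\{0,1\}$ such that each row has only finitely many entries equal to $1$, let $(X,\mu)$ be a $\sigma$-finite measure space and let $(\{f_i\}_{i=1}^\infty,\{D_i\}_{i=1}^\infty)$ together with a nonsingular $F:X\to X$ be an $A_\infty$-branching system on $(X,\mu)$. Suppose $\mu(R_i)<\infty$ for each $i$, and suppose each $\Phi_{f_i}$ is a positive constant function on $D_i$, say $\Phi_{f_i}=b_i>0$. Let $W\subseteq L_1(X,\mu)$ be the linear span of $\{\chi_{R_i}:i\in\mathbb{N}\}$ (finite linear combinations). Then $P_F$ maps $W$ into $W$, and the matrix of $P_F|_W:W\to W$ with respect to the family $(\chi_{R_i})_{i\in\mathbb{N}}$ is $A^TB$, where $B$ is the infinite diagonal matrix with $B_{i,i}=b_i$; that is, for every $z\in\mathbb{N}$, $$P_F(\chi_{R_z})=\sum_{j\in\mathbb{N}}(A^TB)_{j,z}\,\chi_{R_j}=\sum_{j:A(z,j)=1}b_z\,\chi_{R_j}.$$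
   Context: Notation: for measurable $Y,Z\subseteq X$, write $Y\stackrel{\mu\text{-a.e.}}{=}Z$ if $\mu(Y\setminus Z)=0=\mu(Z\setminus Y)$. For a measurable map $h$ on a measurable set $W'$, $\mu\circ h$ is the measure $E\mapsto\mu(h(E))$ on $W'$. For finite $U,V\subseteq\mathbb{N}$ and $j\in\mathbb{N}$ put $A(U,V,j)=\prod_{u\in U}A(u,j)\prod_{v\in V}(1-A(v,j))$. A transformation $F$ is nonsingular if $\mu(F^{-1}(E))=0$ whenever $\mu(E)=0$. The Perron-Frobenius operator $P_F:L_1(X,\mu)\to L_1(X,\mu)$ is defined by $\int_E P_F\psi\,d\mu=\int_{F^{-1}(E)}\psi\,d\mu$ for all measurable $E\subseteq X$ and $\psi\in L_1(X,\mu)$. The product $A^TB$ is the ordinary matrix product (well defined since $B$ is diagonal), with $(A^TB)_{j,z}=A(z,j)b_z$. An $A_\infty$-branching system on $(X,\mu)$ is a family $(\{f_i\}_{i=1}^\infty,\{D_i\}_{i=1}^\infty)$ together with a nonsingular transformation $F:X\to X$ such that: (1) $f_i:D_i\to R_i$ is measurable, $D_i,R_i$ are measurable subsets of $X$, and $f_i(D_i)\stackrel{\mu\text{-a.e.}}{=}R_i$ for each $i$; (2) $F\circ f_i=\mathrm{id}_{D_i}$ $\mu$-a.e. on $D_i$ for each $i$; (3) $\mu(R_i\cap R_j)=0$ for $i\neq j$; (4) $\mu(R_j\cap D_i)=0$ if $A(i,j)=0$ and $\mu(R_j\setminus D_i)=0$ if $A(i,j)=1$; (5) for each pair $U,V$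 of finite subsets of $\mathbb{N}$ such that $A(U,V,j)=1$ for only finitely many $j$, $\bigcap_{u\in U}D_u\cap\bigcap_{v\in V}(X\setminus D_v)\stackrel{\mu\text{-a.e.}}{=}\bigcup_{j:A(U,V,j)=1}R_j$; (6) there exist the Radon-Nikodym derivatives $\Phi_{f_i}$ of $\mu\circ f_i$ with respect to $\mu$ on $D_i$ and $\Phi_{f_i^{-1}}$ of $\mu\circ f_i^{-1}$ with respect to $\mu$ on $R_i$, where $f_i^{-1}:=F|_{R_i}$. *)

theory Defs
  imports "HOL-Analysis.Analysis"
begin

definition ae_eq_set :: "'a measure \<Rightarrow> 'a set \<Rightarrow> 'a set \<Rightarrow> bool" where
  "ae_eq_set M Y Z \<longleftrightarrow> Y \<in> sets M \<and> Z \<in> sets M \<and>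
     emeasure M (Y - Z) = 0 \<and> emeasure M (Z - Y) = 0"

definition nonsingular :: "'a measure \<Rightarrow> ('a \<Rightarrow> 'a) \<Rightarrow> bool" where
  "nonsingular M F \<longleftrightarrow> F \<in> measurable M M \<and>
     (\<forall>E\<in>sets M. emeasure M E = 0 \<longrightarrow> emeasure M (F -` E \<inter> space M) = 0)"

definition Aprod :: "(nat \<Rightarrow> nat \<Rightarrow> real) \<Rightarrow> nat set \<Rightarrow> nat set \<Rightarrow> nat \<Rightarrow> real" where
  "Aprod A U V j = (\<Prod>u\<in>U. A u j) * (\<Prod>v\<in>V. 1 - A v j)"

definition is_RN_deriv_on :: "'a measure \<Rightarrow> ('a \<Rightarrow> 'a) \<Rightarrow> 'a set \<Rightarrow> ('a \<Rightarrow> ennreal) \<Rightarrow> bool" where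
  "is_RN_deriv_on M g W h \<longleftrightarrow> h \<in> borel_measurable M \<and>
     (\<forall>E\<in>sets M. E \<subseteq> W \<longrightarrow> g ` E \<in> sets M \<and>
        emeasure M (g ` E) = set_nn_integral M E h)"

definition A_branching_system ::
  "'a measure \<Rightarrow> (nat \<Rightarrow> nat \<Rightarrow> real) \<Rightarrow> (nat \<Rightarrow> 'a \<Rightarrow> 'a) \<Rightarrow> (nat \<Rightarrow> 'a set)
     \<Rightarrow> (nat \<Rightarrow> 'a set) \<Rightarrow> ('a \<Rightarrow> 'a) \<Rightarrow> bool" where
  "A_branching_system M A f D R F \<longleftrightarrow>
     nonsingular M F \<and>
     (\<forall>i. D i \<in> sets M \<and> R i \<in> sets M \<and> D i \<subseteq> space M \<and> R i \<subseteq> space M \<and>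
          f i \<in> measurable (restrict_space M (D i)) M \<and>
          ae_eq_set M (f i ` D i) (R i)) \<and>
     (\<forall>i. AE x in M. x \<in> D i \<longrightarrow> F (f i x) = x) \<and>
     (\<forall>i j. i \<noteq> j \<longrightarrow> emeasure M (R i \<inter> R j) = 0) \<and>
     (\<forall>i j. A i j = 0 \<longrightarrow> emeasure M (R j \<inter> D i) = 0) \<and>
     (\<forall>i j. A i j = 1 \<longrightarrow> emeasure M (R j - D i) = 0) \<and>
     (\<forall>U V. finite U \<and> finite V \<and> finite {j. Aprod A U V j = 1} \<longrightarrow>
        ae_eq_set M (space M \<inter> (\<Inter>u\<in>U. D u) \<inter> (\<Inter>v\<in>V. space M - D v))
                    (\<Union>j\<in>{j. Aprod A U V j = 1}. R j)) \<and>
     (\<forall>i. (\<exists>\<Phi>. is_RN_deriv_on M (f i) (D i) \<Phi>) \<and> (\<exists>\<Psi>. is_RN_deriv_on M F (R i) \<Psi>))"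

text \<open>phi is (a representative of) the Perron-Frobenius image P_F psi in L_1(X,mu).\<close>
definition is_PF_image :: "'a measure \<Rightarrow> ('a \<Rightarrow> 'a) \<Rightarrow> ('a \<Rightarrow> real) \<Rightarrow> ('a \<Rightarrow> real) \<Rightarrow> bool" where
  "is_PF_image M F psi phi \<longleftrightarrow> integrable M phi \<and>
     (\<forall>E\<in>sets M. (LINT x:E|M. phi x) = (LINT x:(F -` E \<inter> space M)|M. psi x))"

definition chi_span :: "(nat \<Rightarrow> 'a set) \<Rightarrow> ('a \<Rightarrow> real) set" where
  "chi_span R = {(\<lambda>x. \<Sum>i\<in>I. c i * indicator (R i) x) | I c. finite I}"

end

theory Submission imports Defs begin

lemma le_null_cover:
  assumes "A \<subseteq> B \<union> N" "B \<in> sets M" "N \<in> sets M" "emeasure M N = 0"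
  shows "emeasure M A \<le> emeasure M B"
proof -
  have "emeasure M A \<le> emeasure M (B \<union> N)" by (rule emeasure_mono[OF assms(1)]) (use assms in auto)
  also have "\<dots> \<le> emeasure M B + emeasure M N" by (rule emeasure_subadditive) (use assms in auto)
  finally show ?thesis using assms by simp
qed

lemma union_null_inter:
  assumes "finite J" "\<And>j. j \<in> J \<Longrightarrow> S j \<in> sets M"
    "\<And>i j. i \<in> J \<Longrightarrow> j \<in> J \<Longrightarrow> i \<noteq> j \<Longrightarrow> emeasure M (S i \<inter> S j) = 0"
  shows "emeasure M (\<Union>j\<in>J. S j) = (\<Sum>j\<in>J. emeasure M (S j))"
  using assms
proof (induction J rule: finite_induct)
  case empty then show ?case by simp
next
  case (insert k J)
  have U: "(\<Union>j\<in>J. S j) \<in> sets M" using insert by auto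
  have Sk: "S k \<in> sets M" using insert by auto
  have nul: "(\<Union>j\<in>J. S j \<inter> S k) \<in> null_sets M"
    using insert by (intro null_sets_UN') (auto simp: null_sets_def countable_finite)
  have "emeasure M (\<Union>j\<in>insert k J. S j) = emeasure M ((\<Union>j\<in>J. S j) \<union> (S k - (\<Union>j\<in>J. S j \<inter> S k)))"
    by (rule arg_cong[where f="emeasure M"]) auto
  also have "\<dots> = emeasure M (\<Union>j\<in>J. S j) + emeasure M (S k - (\<Union>j\<in>J. S j \<inter> S k))"
    using U Sk nul by (intro plus_emeasure[symmetric]) auto
  also have "emeasure M (S k - (\<Union>j\<in>J. S j \<inter> S k)) = emeasure M (S k)"
    using nul Sk by (rule emeasure_Diff_null_set)
  also have "emeasure M (\<Union>j\<in>J. S j) = (\<Sum>j\<in>J. emeasure M (S j))"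
    using insert by auto
  finally show ?case using insert by (simp add: add.commute)
qed

lemma core:
  fixes M :: "'a measure"
  assumes Ds: "Dz \<in> sets M" and Rs: "Rz \<in> sets M" and Dsp: "Dz \<subseteq> space M"
    and gm: "g \<in> measurable (restrict_space M Dz) M"
    and ae: "ae_eq_set M (g ` Dz) Rz"
    and inv: "AE x in M. x \<in> Dz \<longrightarrow> F (g x) = x"
    and Phi: "is_RN_deriv_on M g Dz (\<lambda>_. ennreal c)"
    and E: "E \<in> sets M" and Fm: "F \<in> measurable M M"
  shows "emeasure M (F -` E \<inter> space M \<inter> Rz) = ennreal c * emeasure M (E \<inter> Dz)"
proof -
  have gsp: "g x \<in> space M" if "x \<in> Dz" for x
    using measurable_space[OF gm, of x] that Dsp by (auto simp: space_restrict_space)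
  have img: "g ` X \<in> sets M \<and> emeasure M (g ` X) = ennreal c * emeasure M X"
    if "X \<in> sets M" "X \<subseteq> Dz" for X
    using Phi that unfolding is_RN_deriv_on_def by (auto simp: nn_integral_cmult_indicator)
  obtain N where N: "{x \<in> space M. \<not> (x \<in> Dz \<longrightarrow> F (g x) = x)} \<subseteq> N" "emeasure M N = 0" "N \<in> sets M"
    using inv by (rule AE_E)
  define N' where "N' = N \<inter> Dz"
  have N's: "N' \<in> sets M" using N Ds by (auto simp: N'_def)
  have gN: "g ` N' \<in> sets M" "emeasure M (g ` N') = 0"
  proof -
    have "emeasure M N' = 0" using N N's by (metis N'_def emeasure_eq_0 inf_le1)
    then show "g ` N' \<in> sets M" "emeasure M (g ` N') = 0" using img[OF N's] by (auto simp: N'_def)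
  qed
  have gD: "g ` Dz \<in> sets M" "emeasure M (g ` Dz - Rz) = 0" "emeasure M (Rz - g ` Dz) = 0"
    using ae by (auto simp: ae_eq_set_def)
  have ED: "E \<inter> Dz \<in> sets M" using E Ds by auto
  have T: "g ` (E \<inter> Dz) \<in> sets M" "emeasure M (g ` (E \<inter> Dz)) = ennreal c * emeasure M (E \<inter> Dz)"
    using img[OF ED] by auto
  have S: "F -` E \<inter> space M \<inter> Rz \<in> sets M"
    using Fm E Rs by auto
  have s1: "F -` E \<inter> space M \<inter> Rz \<subseteq> g ` (E \<inter> Dz) \<union> ((Rz - g ` Dz) \<union> g ` N')"
  proof
    fix y assume y: "y \<in> F -` E \<inter> space M \<inter> Rz"
    show "y \<in> g ` (E \<inter> Dz) \<union> ((Rz - g ` Dz) \<union> g ` N')"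
    proof (cases "y \<in> g ` Dz")
      case True
      then obtain x where x: "x \<in> Dz" "y = g x" by auto
      show ?thesis
      proof (cases "x \<in> N'")
        case False
        then have "F (g x) = x" using N(1) x Dsp by (auto simp: N'_def)
        then show ?thesis using x y by auto
      qed (use x in auto)
    qed (use y in auto)
  qed
  have s2: "g ` (E \<inter> Dz) \<subseteq> (F -` E \<inter> space M \<inter> Rz) \<union> ((g ` Dz - Rz) \<union> g ` N')"
  proof
    fix y assume "y \<in> g ` (E \<inter> Dz)"
    then obtain x where x: "x \<in> E" "x \<in> Dz" "y = g x" by auto
    show "y \<in> (F -` E \<inter> space M \<inter> Rz) \<union> ((g ` Dz - Rz) \<union> g ` N')"
    proof (cases "x \<in> N'")
      case False
      then have "F (g x) = x" using N(1) x Dsp by (auto simp: N'_def)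
      then show ?thesis using x gsp[of x] by auto
    qed (use x in auto)
  qed
  have n1: "emeasure M ((Rz - g ` Dz) \<union> g ` N') = 0"
    using gD gN Rs by (intro emeasure_Un_null_set[THEN trans]) auto
  have n2: "emeasure M ((g ` Dz - Rz) \<union> g ` N') = 0"
    using gD gN Rs by (intro emeasure_Un_null_set[THEN trans]) auto
  have "emeasure M (F -` E \<inter> space M \<inter> Rz) = emeasure M (g ` (E \<inter> Dz))"
  proof (rule antisym)
    show "emeasure M (F -` E \<inter> space M \<inter> Rz) \<le> emeasure M (g ` (E \<inter> Dz))"
      by (rule le_null_cover[OF s1 T(1) _ n1]) (use gD gN Rs in auto)
    show "emeasure M (g ` (E \<inter> Dz)) \<le> emeasure M (F -` E \<inter> space M \<inter> Rz)"
      by (rule le_null_cover[OF s2 S _ n2]) (use gD gN Rs in auto)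
  qed
  then show ?thesis using T by simp
qed

lemma decomp:
  assumes fin: "finite J" and Rs: "\<And>j. R j \<in> sets M" and Ds: "Dz \<in> sets M"
    and ae: "ae_eq_set M (space M \<inter> Dz) (\<Union>j\<in>J. R j)"
    and disj: "\<And>i j. i \<noteq> j \<Longrightarrow> emeasure M (R i \<inter> R j) = 0"
    and E: "E \<in> sets M"
  shows "emeasure M (E \<inter> Dz) = (\<Sum>j\<in>J. emeasure M (E \<inter> R j))"
proof -
  have Esp: "E \<subseteq> space M" using E sets.sets_into_space by auto
  have U: "(\<Union>j\<in>J. R j) \<in> sets M" "space M \<inter> Dz \<in> sets M"
    "emeasure M (space M \<inter> Dz - (\<Union>j\<in>J. R j)) = 0" "emeasure M ((\<Union>j\<in>J. R j) - space M \<inter> Dz) = 0"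
    using ae by (auto simp: ae_eq_set_def)
  have UE: "(\<Union>j\<in>J. E \<inter> R j) \<in> sets M" using fin Rs E by auto
  have "emeasure M (E \<inter> Dz) = emeasure M (\<Union>j\<in>J. E \<inter> R j)"
  proof (rule antisym)
    show "emeasure M (E \<inter> Dz) \<le> emeasure M (\<Union>j\<in>J. E \<inter> R j)"
      by (rule le_null_cover[OF _ UE _ U(3)]) (use Esp U in auto)
    show "emeasure M (\<Union>j\<in>J. E \<inter> R j) \<le> emeasure M (E \<inter> Dz)"
      by (rule le_null_cover[OF _ _ _ U(4)]) (use Esp U E Ds in auto)
  qed
  also have "\<dots> = (\<Sum>j\<in>J. emeasure M (E \<inter> R j))"
  proof (rule union_null_inter[OF fin])
    show "\<And>j. j \<in> J \<Longrightarrow> E \<inter> R j \<in> sets M" using E Rs by auto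
    fix i j assume "i \<in> J" "j \<in> J" "i \<noteq> j"
    then have "emeasure M (E \<inter> R i \<inter> (E \<inter> R j)) \<le> emeasure M (R i \<inter> R j)"
      using Rs by (intro emeasure_mono) auto
    then show "emeasure M (E \<inter> R i \<inter> (E \<inter> R j)) = 0" using disj[OF \<open>i \<noteq> j\<close>] by simp
  qed
  finally show ?thesis .
qed

lemma single:
  fixes M :: "'a measure" and A :: "nat \<Rightarrow> nat \<Rightarrow> real"
  assumes Arows: "\<forall>i. finite {j. A i j = 1}"
    and bs: "A_branching_system M A f D R F"
    and Rfin: "\<forall>i. emeasure M (R i) < \<infinity>"
    and bpos: "\<forall>i. b i > 0"
    and Phi: "\<forall>i. is_RN_deriv_on M (f i) (D i) (\<lambda>_. ennreal (b i))"
  shows "is_PF_image M F (indicator (R z))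
                (\<lambda>x. \<Sum>j\<in>{j. A z j = 1}. (A z j * b z) * indicator (R j) x)"
proof -
  define J where "J = {j. A z j = 1}"
  have finJ: "finite J" using Arows by (auto simp: J_def)
  have Fm: "F \<in> measurable M M" using bs by (auto simp: A_branching_system_def nonsingular_def)
  have Rs: "\<And>j. R j \<in> sets M" using bs by (auto simp: A_branching_system_def)
  have Ds: "D z \<in> sets M" "D z \<subseteq> space M" using bs by (auto simp: A_branching_system_def)
  have gm: "f z \<in> measurable (restrict_space M (D z)) M" "ae_eq_set M (f z ` D z) (R z)"
    "AE x in M. x \<in> D z \<longrightarrow> F (f z x) = x"
    using bs by (auto simp: A_branching_system_def)
  have disj: "\<And>i j. i \<noteq> j \<Longrightarrow> emeasure M (R i \<inter> R j) = 0"
    using bs by (auto simp: A_branching_system_def)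
  have aeD: "ae_eq_set M (space M \<inter> D z) (\<Union>j\<in>J. R j)"
  proof -
    have "{j. Aprod A {z} {} j = 1} = J" by (auto simp: Aprod_def J_def)
    moreover have "finite {j. Aprod A {z} {} j = 1}" using finJ calculation by simp
    ultimately have "ae_eq_set M (space M \<inter> (\<Inter>u\<in>{z}. D u) \<inter> (\<Inter>v\<in>{}. space M - D v))
                    (\<Union>j\<in>{j. Aprod A {z} {} j = 1}. R j)"
      using bs unfolding A_branching_system_def by blast
    then show ?thesis using \<open>{j. Aprod A {z} {} j = 1} = J\<close> by simp
  qed
  have ERfin: "emeasure M (E \<inter> R j) \<noteq> \<infinity>" if "E \<in> sets M" for E j
  proof -
    have "emeasure M (E \<inter> R j) \<le> emeasure M (R j)" using that Rs by (intro emeasure_mono) auto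
    then show ?thesis using Rfin by (metis top.not_eq_extremum leD)
  qed
  have intg: "integrable M (\<lambda>x. \<Sum>j\<in>J. (A z j * b z) * indicator (R j) x)"
    proof (rule Bochner_Integration.integrable_sum)
    fix j show "integrable M (\<lambda>x. (A z j * b z) * indicator (R j) x)"
      using Rs Rfin by (intro integrable_mult_right integrable_real_indicator) auto
  qed
  show ?thesis unfolding is_PF_image_def J_def[symmetric]
  proof (intro conjI ballI intg)
    fix E assume E: "E \<in> sets M"
    define S where "S = F -` E \<inter> space M"
    have Ss: "S \<inter> R z \<in> sets M" using Fm E Rs by (auto simp: S_def)
    have key: "emeasure M (S \<inter> R z) = ennreal (b z) * (\<Sum>j\<in>J. emeasure M (E \<inter> R j))"
      unfolding S_def
      using core[OF Ds(1) Rs Ds(2) gm(1) gm(2) gm(3) _ E Fm, of "b z"] Phi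
        decomp[OF finJ Rs Ds(1) aeD disj E] by simp
    have "(\<Sum>j\<in>J. emeasure M (E \<inter> R j)) = ennreal (\<Sum>j\<in>J. measure M (E \<inter> R j))"
      using ERfin[OF E] by (simp add: emeasure_eq_ennreal_measure)
    then have key2: "measure M (S \<inter> R z) = b z * (\<Sum>j\<in>J. measure M (E \<inter> R j))"
    proof -
      have "0 \<le> b z" using bpos by (simp add: less_imp_le)
      moreover have "0 \<le> (\<Sum>j\<in>J. measure M (E \<inter> R j))" by (simp add: sum_nonneg)
      ultimately show ?thesis using key \<open>_ = ennreal (\<Sum>j\<in>J. measure M (E \<inter> R j))\<close>
        unfolding measure_def[of M "S \<inter> R z"]
        by (simp add: ennreal_mult[symmetric])
    qed
    have "(LINT x:E|M. (\<Sum>j\<in>J. (A z j * b z) * indicator (R j) x))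
        = integral\<^sup>L M (\<lambda>x. \<Sum>j\<in>J. b z * indicator (E \<inter> R j) x)"
      unfolding set_lebesgue_integral_def
      by (rule Bochner_Integration.integral_cong)
         (auto simp: J_def sum_distrib_left indicator_inter_arith intro!: sum.cong)
    also have "\<dots> = (\<Sum>j\<in>J. b z * measure M (E \<inter> R j))"
      using E Rs ERfin[OF E] sets.sets_into_space[OF E]
      by (subst Bochner_Integration.integral_sum) (auto simp: top.not_eq_extremum Int_absorb2 intro!: sum.cong)
    also have "\<dots> = measure M (S \<inter> R z)" using key2 by (simp add: sum_distrib_left)
    also have "\<dots> = (LINT x:S|M. indicator (R z) x)"
      unfolding set_lebesgue_integral_def using Ss sets.sets_into_space[OF Ss]
      by (simp add: indicator_inter_arith[symmetric] Int_absorb2)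
    finally show "(LINT x:E|M. (\<Sum>j\<in>J. (A z j * b z) * indicator (R j) x))
        = (LINT x:(F -` E \<inter> space M)|M. indicator (R z) x)" by (simp add: S_def)
  qed
qed

lemma lin:
  assumes fin: "finite I" and ps: "\<And>i. i \<in> I \<Longrightarrow> is_PF_image M F (psi i) (phi i)"
    and ip: "\<And>i. i \<in> I \<Longrightarrow> integrable M (psi i)" and Fm: "F \<in> measurable M M"
  shows "is_PF_image M F (\<lambda>x. \<Sum>i\<in>I. c i * psi i x) (\<lambda>x. \<Sum>i\<in>I. c i * phi i x)"
  unfolding is_PF_image_def
proof (intro conjI ballI)
  have iph: "\<And>i. i \<in> I \<Longrightarrow> integrable M (phi i)" using ps by (auto simp: is_PF_image_def)
  then show "integrable M (\<lambda>x. \<Sum>i\<in>I. c i * phi i x)" by (auto intro!: Bochner_Integration.integrable_sum)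
  fix E assume E: "E \<in> sets M"
  have S: "F -` E \<inter> space M \<in> sets M" using Fm E by auto
  have "(LINT x:E|M. (\<Sum>i\<in>I. c i * phi i x)) = (\<Sum>i\<in>I. c i * (LINT x:E|M. phi i x))"
    unfolding set_lebesgue_integral_def
  proof -
    have int2: "\<And>i. i \<in> I \<Longrightarrow> integrable M (\<lambda>x. indicator E x *\<^sub>R phi i x)"
      using iph E by (intro integrable_mult_indicator) auto
    have "integral\<^sup>L M (\<lambda>x. indicator E x *\<^sub>R (\<Sum>i\<in>I. c i * phi i x)) = integral\<^sup>L M (\<lambda>x. \<Sum>i\<in>I. c i * (indicator E x *\<^sub>R phi i x))"
      by (rule Bochner_Integration.integral_cong) (auto simp: sum_distrib_left intro!: sum.cong)
    also have "\<dots> = (\<Sum>i\<in>I. integral\<^sup>L M (\<lambda>x. c i * (indicator E x *\<^sub>R phi i x)))"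
      by (rule Bochner_Integration.integral_sum) (use int2 in auto)
    also have "\<dots> = (\<Sum>i\<in>I. c i * integral\<^sup>L M (\<lambda>x. indicator E x *\<^sub>R phi i x))"
      by (rule sum.cong[OF refl]) (rule integral_mult_right_zero)
    finally show "integral\<^sup>L M (\<lambda>x. indicator E x *\<^sub>R (\<Sum>i\<in>I. c i * phi i x)) = (\<Sum>i\<in>I. c i * integral\<^sup>L M (\<lambda>x. indicator E x *\<^sub>R phi i x))" .
  qed
  also have "\<dots> = (\<Sum>i\<in>I. c i * (LINT x:(F -` E \<inter> space M)|M. psi i x))"
    using ps E by (auto simp: is_PF_image_def intro!: sum.cong)
  also have "\<dots> = (LINT x:(F -` E \<inter> space M)|M. (\<Sum>i\<in>I. c i * psi i x))"
    unfolding set_lebesgue_integral_def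
  proof -
    have int2: "\<And>i. i \<in> I \<Longrightarrow> integrable M (\<lambda>x. indicator (F -` E \<inter> space M) x *\<^sub>R psi i x)"
      using ip S by (intro integrable_mult_indicator) auto
    have "integral\<^sup>L M (\<lambda>x. indicator (F -` E \<inter> space M) x *\<^sub>R (\<Sum>i\<in>I. c i * psi i x)) = integral\<^sup>L M (\<lambda>x. \<Sum>i\<in>I. c i * (indicator (F -` E \<inter> space M) x *\<^sub>R psi i x))"
      by (rule Bochner_Integration.integral_cong) (auto simp: sum_distrib_left intro!: sum.cong)
    also have "\<dots> = (\<Sum>i\<in>I. integral\<^sup>L M (\<lambda>x. c i * (indicator (F -` E \<inter> space M) x *\<^sub>R psi i x)))"
      by (rule Bochner_Integration.integral_sum) (use int2 in auto)
    also have "\<dots> = (\<Sum>i\<in>I. c i * integral\<^sup>L M (\<lambda>x. indicator (F -` E \<inter> space M) x *\<^sub>R psi i x))"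
      by (rule sum.cong[OF refl]) (rule integral_mult_right_zero)
    finally show "(\<Sum>i\<in>I. c i * integral\<^sup>L M (\<lambda>x. indicator (F -` E \<inter> space M) x *\<^sub>R psi i x)) = integral\<^sup>L M (\<lambda>x. indicator (F -` E \<inter> space M) x *\<^sub>R (\<Sum>i\<in>I. c i * psi i x))" by simp
  qed
  finally show "(LINT x:E|M. (\<Sum>i\<in>I. c i * phi i x)) = (LINT x:(F -` E \<inter> space M)|M. (\<Sum>i\<in>I. c i * psi i x))" .
qed

theorem mainTheorem7:
  fixes M :: "'a measure" and A :: "nat \<Rightarrow> nat \<Rightarrow> real"
    and f :: "nat \<Rightarrow> 'a \<Rightarrow> 'a" and D R :: "nat \<Rightarrow> 'a set" and F :: "'a \<Rightarrow> 'a"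
    and b :: "nat \<Rightarrow> real"
  assumes A01: "\<forall>i j. A i j \<in> {0, 1}"
    and Arows: "\<forall>i. finite {j. A i j = 1}"
    and sf: "sigma_finite_measure M"
    and bs: "A_branching_system M A f D R F"
    and Rfin: "\<forall>i. emeasure M (R i) < \<infinity>"
    and bpos: "\<forall>i. b i > 0"
    and Phi: "\<forall>i. is_RN_deriv_on M (f i) (D i) (\<lambda>_. ennreal (b i))"
  shows "(\<forall>\<psi>\<in>chi_span R. \<exists>\<phi>\<in>chi_span R. is_PF_image M F \<psi> \<phi>) \<and>
         (\<forall>z. is_PF_image M F (indicator (R z))
                (\<lambda>x. \<Sum>j\<in>{j. A z j = 1}. (A z j * b z) * indicator (R j) x))"
proof -
  have one: "\<And>z. is_PF_image M F (indicator (R z))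
                (\<lambda>x. \<Sum>j\<in>{j. A z j = 1}. (A z j * b z) * indicator (R j) x)"
    using single[OF Arows bs Rfin bpos Phi] .
  have Fm: "F \<in> measurable M M" using bs by (auto simp: A_branching_system_def nonsingular_def)
  have Rs: "\<And>j. R j \<in> sets M" using bs by (auto simp: A_branching_system_def)
  have "\<exists>\<phi>\<in>chi_span R. is_PF_image M F \<psi> \<phi>" if "\<psi> \<in> chi_span R" for \<psi>
  proof -
    have "\<exists>I c. \<psi> = (\<lambda>x. \<Sum>i\<in>I. c i * indicator (R i) x) \<and> finite I"
      using that unfolding chi_span_def mem_Collect_eq .
    then obtain I c where I: "finite I" "\<psi> = (\<lambda>x. \<Sum>i\<in>I. c i * indicator (R i) x)"
      by (elim exE conjE) simp
    define phi where "phi i = (\<lambda>x. \<Sum>j\<in>{j. A i j = 1}. (A i j * b i) * indicator (R j) x)" for i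
    define K where "K = (\<Union>i\<in>I. {j. A i j = 1})"
    define d where "d j = (\<Sum>i\<in>I. c i * (A i j * b i))" for j
    have finK: "finite K" using I Arows by (auto simp: K_def)
    have PF: "is_PF_image M F \<psi> (\<lambda>x. \<Sum>i\<in>I. c i * phi i x)"
      unfolding I(2) phi_def
      by (rule lin[OF I(1) one _ Fm]) (use Rs Rfin in auto)
    have eq: "(\<lambda>x. \<Sum>i\<in>I. c i * phi i x) = (\<lambda>x. \<Sum>j\<in>K. d j * indicator (R j) x)"
    proof
      fix x
      have "(\<Sum>i\<in>I. c i * phi i x) = (\<Sum>i\<in>I. \<Sum>j\<in>K. c i * ((A i j * b i) * indicator (R j) x))"
      proof (rule sum.cong[OF refl])
        fix i assume i: "i \<in> I"
        have "phi i x = (\<Sum>j\<in>K. (A i j * b i) * indicator (R j) x)"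
          unfolding phi_def
        proof (rule sum.mono_neutral_left[OF finK])
          show "{j. A i j = 1} \<subseteq> K" using i by (auto simp: K_def)
          show "\<forall>j\<in>K - {j. A i j = 1}. A i j * b i * indicator (R j) x = 0"
            using A01 by auto
        qed
        then show "c i * phi i x = (\<Sum>j\<in>K. c i * ((A i j * b i) * indicator (R j) x))"
          by (simp add: sum_distrib_left)
      qed
      also have "\<dots> = (\<Sum>j\<in>K. \<Sum>i\<in>I. c i * ((A i j * b i) * indicator (R j) x))"
        by (rule sum.swap)
      also have "\<dots> = (\<Sum>j\<in>K. d j * indicator (R j) x)"
        by (simp add: d_def sum_distrib_right mult.assoc)
      finally show "(\<Sum>i\<in>I. c i * phi i x) = (\<Sum>j\<in>K. d j * indicator (R j) x)" .
    qed
    have "(\<lambda>x. \<Sum>j\<in>K. d j * indicator (R j) x) \<in> chi_span R"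
      unfolding chi_span_def by (rule CollectI, intro exI conjI, rule refl, rule finK)
    then show ?thesis using PF eq by auto
  qed
  with one show ?thesis by blast
qed
end
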